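(* For any formula $A$, there exists an adequate $A$-removing mapping $\mathsf{re}_A:\mathcal P\times\mathcal P\to\mathcal P$.
   Context: Formulas are built from $\bot$ and atoms by $\to$ and $\Box$; sequents $\Gamma\Rightarrow\Delta$ have finite multisets of formulas on each side; $\Box\Pi$ denotes $\{\Box B:B\in\Pi\}$. The calculus $\mathsf{Grz}_\infty+\mathsf{cut}$ has initial sequents $\Gamma,p\Rightarrow p,\Delta$ ($p$ atomic), $\Gamma,\bot\Rightarrow\Delta$, and rules $(\to_L)$ from $\Gamma,B\Rightarrow\Delta$ and $\Gamma\Rightarrow A,\Delta$ infer $\Gamma,A\to B\Rightarrow\Delta$; $(\to_R)$ from $\Gamma,A\Rightarrow B,\Delta$ infer $\Gamma\Rightarrow A\to B,\Delta$; $(\mathsf{refl})$ from $\Gamma,B,\Box B\Rightarrow\Delta$ infer $\Gamma,\Box B\Rightarrow\Delta$; $(\Box)$ from left premise $\Gamma,\Box\Pi\Rightarrow A,\Delta$ and right premise $\Box\Pi\Rightarrow A$ infer $\Gamma,\Box\Pi\Rightarrow\Box A,\Delta$; $(\mathsf{cut})$ from $\Gamma\Rightarrow A,\Delta$ and $\Gamma,A\Rightarrow\Delta$ infer $\Gamma\Rightarrow\Delta$. An $\infty$-proof is a possibly infinite tree of sequents built by these rules with leaves labelled by initial sequents, in which every infinite branch passes through a right premise of $(\Box)$ infinitely often; $\mathcal P$ is the set of all $\infty$-proofs. The $n$-fragment of an $\infty$-proof is the finite tree obtained by cutting every branch at the $n$-th (from the root) right premise of $(\Box)$. Write $\pi\sim_n\tau$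 if the $n$-fragments of $\pi,\tau$ coincide, and $\pi\sim_0\tau$ always. $\mathcal P_n$ is the set of $\infty$-proofs with no application of $(\mathsf{cut})$ in their $n$-fragment, and $\mathcal P_0=\mathcal P$. A pair $(\pi,\tau)$ is a cut pair with cut formula $A$ and cut result $\Gamma\Rightarrow\Delta$ if $\pi$ is an $\infty$-proof of $\Gamma\Rightarrow\Delta,A$ and $\tau$ is an $\infty$-proof of $A,\Gamma\Rightarrow\Delta$. A mapping $\mathsf u:\mathcal P\times\mathcal P\to\mathcal P$ is $A$-removing if it is non-expansive (i.e. $\pi\sim_n\pi'$ and $\tau\sim_n\tau'$ imply $\mathsf u(\pi,\tau)\sim_n\mathsf u(\pi',\tau')$ for all $n$) and maps every cut pair with cut formula $A$ to an $\infty$-proof of its cut result. It is adequate if for every $n\in\mathbb N$, $\pi,\tau\in\mathcal P_n$ implies $\mathsf u(\pi,\tau)\in\mathcal P_n$. *)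

theory Defs
  imports Main "HOL-Library.Multiset"
begin

datatype 'a fm = Bot | Atom 'a | Imp "'a fm" "'a fm" | Box "'a fm"

type_synonym 'a sequent = "'a fm multiset \<times> 'a fm multiset"

text \<open>Rule labels of the calculus Grz_infinity + cut.\<close>
datatype rule = Init | ImpL | ImpR | Refl | BoxR | Cut

codatatype 'l ptree = Node (lbl: 'l) (subs: "'l ptree list")

type_synonym 'a dtree = "('a sequent \<times> rule) ptree"

fun seq_of :: "'a dtree \<Rightarrow> 'a sequent" where
  "seq_of t = fst (lbl t)"

fun rule_of :: "'a dtree \<Rightarrow> rule" where
  "rule_of t = snd (lbl t)"

fun sub :: "'l ptree \<Rightarrow> nat list \<Rightarrow> 'l ptree option" where
  "sub t [] = Some t"
| "sub t (i # p) = (if i < length (subs t) then sub (subs t ! i) p else None)"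

definition box_right :: "'a dtree \<Rightarrow> nat \<Rightarrow> bool" where
  "box_right t i \<longleftrightarrow> rule_of t = BoxR \<and> i = 1 \<and> i < length (subs t)"

fun bc :: "'a dtree \<Rightarrow> nat list \<Rightarrow> nat" where
  "bc t [] = 0"
| "bc t (i # p) = (if box_right t i then 1 else 0)
                 + (if i < length (subs t) then bc (subs t ! i) p else 0)"

definition correct_node :: "'a dtree \<Rightarrow> bool" where
  "correct_node t \<longleftrightarrow>
    (let S = seq_of t; ps = map seq_of (subs t) in
     case rule_of t of
       Init \<Rightarrow> ps = [] \<and>
                ((\<exists>\<Gamma> \<Delta> p. S = (\<Gamma> + {#Atom p#}, {#Atom p#} + \<Delta>)) \<or>
                 (\<exists>\<Gamma> \<Delta>. S = (\<Gamma> + {#Bot#}, \<Delta>)))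
     | ImpL \<Rightarrow> (\<exists>\<Gamma> \<Delta> A B. S = (\<Gamma> + {#Imp A B#}, \<Delta>) \<and>
                 ps = [(\<Gamma> + {#B#}, \<Delta>), (\<Gamma>, {#A#} + \<Delta>)])
     | ImpR \<Rightarrow> (\<exists>\<Gamma> \<Delta> A B. S = (\<Gamma>, {#Imp A B#} + \<Delta>) \<and>
                 ps = [(\<Gamma> + {#A#}, {#B#} + \<Delta>)])
     | Refl \<Rightarrow> (\<exists>\<Gamma> \<Delta> B. S = (\<Gamma> + {#Box B#}, \<Delta>) \<and>
                 ps = [(\<Gamma> + {#B#} + {#Box B#}, \<Delta>)])
     | BoxR \<Rightarrow> (\<exists>\<Gamma> \<Pi> \<Delta> A. S = (\<Gamma> + image_mset Box \<Pi>, {#Box A#} + \<Delta>) \<and>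
                 ps = [(\<Gamma> + image_mset Box \<Pi>, {#A#} + \<Delta>), (image_mset Box \<Pi>, {#A#})])
     | Cut \<Rightarrow> (\<exists>\<Gamma> \<Delta> A. S = (\<Gamma>, \<Delta>) \<and>
                 ps = [(\<Gamma>, {#A#} + \<Delta>), (\<Gamma> + {#A#}, \<Delta>)]))"

definition inf_branch :: "'a dtree \<Rightarrow> (nat \<Rightarrow> nat) \<Rightarrow> bool" where
  "inf_branch t f \<longleftrightarrow> (\<forall>k. sub t (map f [0..<Suc k]) \<noteq> None)"

definition is_proof :: "'a dtree \<Rightarrow> bool" where
  "is_proof t \<longleftrightarrow>
     (\<forall>p s. sub t p = Some s \<longrightarrow> correct_node s) \<and>
     (\<forall>f. inf_branch t f \<longrightarrow>
        infinite {k. \<exists>s. sub t (map f [0..<k]) = Some s \<and> box_right s (f k)})"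

definition proofs :: "'a dtree set" where
  "proofs = {t. is_proof t}"

definition proof_of :: "'a dtree \<Rightarrow> 'a sequent \<Rightarrow> bool" where
  "proof_of t S \<longleftrightarrow> is_proof t \<and> seq_of t = S"

text \<open>The n-fragment as a partial map on positions: interior nodes (fewer than n
  right box premises passed) carry their sequent, rule and number of premises;
  the nodes where a branch is cut (the n-th right premise of the box rule) carry
  only their sequent; everything above is removed.\<close>
definition frag :: "nat \<Rightarrow> 'a dtree \<Rightarrow> nat list \<Rightarrow>
                    (('a sequent \<times> rule \<times> nat) + 'a sequent) option" where
  "frag n t p = (case sub t p of
      None \<Rightarrow> None
    | Some s \<Rightarrow>
        if bc t p < n then Some (Inl (seq_of s, rule_of s, length (subs s)))
        else if p \<noteq> [] \<and> bc t p = n \<and> bc t (butlast p) < n then Some (Inr (seq_of s))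
        else None)"

definition sim :: "nat \<Rightarrow> 'a dtree \<Rightarrow> 'a dtree \<Rightarrow> bool" where
  "sim n t u \<longleftrightarrow> n = 0 \<or> frag n t = frag n u"

definition proofs_n :: "nat \<Rightarrow> 'a dtree set" where
  "proofs_n n = {t \<in> proofs. \<forall>p s. sub t p = Some s \<longrightarrow> bc t p < n \<longrightarrow> rule_of s \<noteq> Cut}"

definition non_expansive :: "('a dtree \<Rightarrow> 'a dtree \<Rightarrow> 'a dtree) \<Rightarrow> bool" where
  "non_expansive u \<longleftrightarrow>
     (\<forall>n \<pi> \<pi>' \<tau> \<tau>'. \<pi> \<in> proofs \<longrightarrow> \<pi>' \<in> proofs \<longrightarrow> \<tau> \<in> proofs \<longrightarrow> \<tau>' \<in> proofs \<longrightarrow>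
        sim n \<pi> \<pi>' \<longrightarrow> sim n \<tau> \<tau>' \<longrightarrow> sim n (u \<pi> \<tau>) (u \<pi>' \<tau>'))"

definition removing :: "'a fm \<Rightarrow> ('a dtree \<Rightarrow> 'a dtree \<Rightarrow> 'a dtree) \<Rightarrow> bool" where
  "removing A u \<longleftrightarrow>
     (\<forall>\<pi> \<tau>. \<pi> \<in> proofs \<longrightarrow> \<tau> \<in> proofs \<longrightarrow> u \<pi> \<tau> \<in> proofs) \<and>
     non_expansive u \<and>
     (\<forall>\<pi> \<tau> \<Gamma> \<Delta>. proof_of \<pi> (\<Gamma>, \<Delta> + {#A#}) \<longrightarrow> proof_of \<tau> (\<Gamma> + {#A#}, \<Delta>) \<longrightarrow>
        proof_of (u \<pi> \<tau>) (\<Gamma>, \<Delta>))"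

definition adequate :: "('a dtree \<Rightarrow> 'a dtree \<Rightarrow> 'a dtree) \<Rightarrow> bool" where
  "adequate u \<longleftrightarrow> (\<forall>n \<pi> \<tau>. \<pi> \<in> proofs_n n \<longrightarrow> \<tau> \<in> proofs_n n \<longrightarrow> u \<pi> \<tau> \<in> proofs_n n)"

end

theory Submission
  imports Defs "HOL-Library.Infinite_Set"
begin

primcorec bld :: "('s \<Rightarrow> 'l) \<Rightarrow> ('s \<Rightarrow> 's list) \<Rightarrow> 's \<Rightarrow> 'l ptree" where
  "bld lab ks s = Node (lab s) (map (bld lab ks) (ks s))"

fun stp :: "('s \<Rightarrow> 's list) \<Rightarrow> 's \<Rightarrow> nat list \<Rightarrow> 's" where
  "stp ks s [] = s"
| "stp ks s (i # p) = stp ks (ks s ! i) p"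

lemma sub_bld: "sub (bld lab ks s) p = Some t \<Longrightarrow> t = bld lab ks (stp ks s p)"
proof (induction p arbitrary: s)
  case Nil then show ?case by simp
next
  case (Cons i p) then show ?case by (auto split: if_splits)
qed

lemma stp_snoc: "stp ks s (p @ [i]) = ks (stp ks s p) ! i"
  by (induction p arbitrary: s) auto

lemma sub_snoc: "sub t p = Some s \<Longrightarrow> sub t (p @ [i]) = (if i < length (subs s) then Some (subs s ! i) else None)"
  by (induction p arbitrary: t) (auto split: if_splits)

lemma sub_snoc_Some: "sub t (p @ [i]) = Some u \<Longrightarrow> \<exists>s. sub t p = Some s \<and> i < length (subs s) \<and> u = subs s ! i"
  by (induction p arbitrary: t) (auto split: if_splits)

lemma map_upt_Suc: "map f [0..<Suc k] = map f [0..<k] @ [f k]" by simp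

fun isbox :: "'a fm \<Rightarrow> bool" where
  "isbox (Box B) = True" | "isbox _ = False"

fun unbox :: "'a fm \<Rightarrow> 'a fm" where
  "unbox (Box B) = B" | "unbox F = F"

definition boxes :: "'a fm set \<Rightarrow> 'a fm set" where
  "boxes L = {F \<in> L. isbox F}"

definition axS :: "'a fm set \<Rightarrow> 'a fm set \<Rightarrow> bool" where
  "axS L R \<longleftrightarrow> (\<exists>p. Atom p \<in> L \<and> Atom p \<in> R) \<or> Bot \<in> L"

type_synonym 'a ss = "'a fm set \<times> 'a fm set"

definition step_ok :: "'a ss set \<Rightarrow> 'a ss set \<Rightarrow> 'a fm set \<Rightarrow> 'a fm set \<Rightarrow> bool" where
  "step_ok P X L R \<longleftrightarrow> axS L R \<or>
   (\<exists>A B. Imp A B \<in> L \<and> (L - {Imp A B} \<union> {B}, R) \<in> X \<and> (L - {Imp A B}, R \<union> {A}) \<in> X) \<or>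
   (\<exists>A B. Imp A B \<in> R \<and> (L \<union> {A}, R - {Imp A B} \<union> {B}) \<in> X) \<or>
   (\<exists>B. Box B \<in> L \<and> (L \<union> {B}, R) \<in> X) \<or>
   (\<exists>A. Box A \<in> R \<and> (L, R - {Box A} \<union> {A}) \<in> X \<and> (boxes L, {A}) \<in> P)"

fun Dk :: "'a ss set \<Rightarrow> nat \<Rightarrow> 'a ss set" where
  "Dk P 0 = {}"
| "Dk P (Suc k) = {(L,R). step_ok P (Dk P k) L R}"

datatype 'a pst = PS "'a fm multiset" "'a fm multiset" "'a fm set" "'a fm set" nat

fun move :: "'a ss set \<Rightarrow> 'a pst \<Rightarrow> rule \<Rightarrow> 'a pst list \<Rightarrow> bool" where
 "move N (PS G E L R k) r kids \<longleftrightarrow> (case k of 0 \<Rightarrow> False | Suc k' \<Rightarrow>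
   (r = Init \<and> kids = [] \<and> axS L R) \<or>
   (\<exists>A B. r = ImpL \<and> Imp A B \<in> L \<and> (L - {Imp A B} \<union> {B}, R) \<in> Dk N k' \<and> (L - {Imp A B}, R \<union> {A}) \<in> Dk N k' \<and>
      kids = [PS (G - {#Imp A B#} + {#B#}) E (L - {Imp A B} \<union> {B}) R k',
              PS (G - {#Imp A B#}) ({#A#} + E) (L - {Imp A B}) (R \<union> {A}) k']) \<or>
   (\<exists>A B. r = ImpR \<and> Imp A B \<in> R \<and> (L \<union> {A}, R - {Imp A B} \<union> {B}) \<in> Dk N k' \<and>
      kids = [PS (G + {#A#}) ({#B#} + (E - {#Imp A B#})) (L \<union> {A}) (R - {Imp A B} \<union> {B}) k']) \<or>
   (\<exists>B. r = Refl \<and> Box B \<in> L \<and> (L \<union> {B}, R) \<in> Dk N k' \<and>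
      kids = [PS (G - {#Box B#} + {#B#} + {#Box B#}) E (L \<union> {B}) R k']) \<or>
   (\<exists>A k2. r = BoxR \<and> Box A \<in> R \<and> (L, R - {Box A} \<union> {A}) \<in> Dk N k' \<and> (boxes L, {A}) \<in> Dk N k2 \<and>
      kids = [PS G ({#A#} + (E - {#Box A#})) L (R - {Box A} \<union> {A}) k',
              PS (filter_mset isbox G) {#A#} (boxes L) {A} k2]))"

fun good :: "'a ss set \<Rightarrow> 'a pst \<Rightarrow> bool" where
  "good N (PS G E L R k) \<longleftrightarrow> (L,R) \<in> Dk N k \<and> L \<subseteq> set_mset G \<and> R \<subseteq> set_mset E"

fun seqp :: "'a pst \<Rightarrow> 'a sequent" where
  "seqp (PS G E L R k) = (G, E)"

fun kp :: "'a pst \<Rightarrow> nat" where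
  "kp (PS G E L R k) = k"

lemma good_kids:
  assumes "good N st" "move N st r kids" "c \<in> set kids"
  shows "good N c"
proof -
  obtain G E L R k where st: "st = PS G E L R k" by (cases st)
  from assms st obtain k' where k: "k = Suc k'" by (cases k) auto
  have mr: "\<And>x y M. x \<in># M \<Longrightarrow> x \<noteq> y \<Longrightarrow> x \<in># M - {#y#}"
    by (simp add: in_diff_count)
  show ?thesis using assms unfolding st k
    apply (auto simp: boxes_def dest: mr)
       apply (meson in_diff_count mr subset_iff)+
    done
qed

lemma image_unbox: "image_mset Box (image_mset unbox (filter_mset isbox G)) = filter_mset isbox G"
proof -
  have h: "\<And>F. isbox F \<Longrightarrow> Box (unbox F) = F" by (case_tac F) auto
  show ?thesis by (induction G) (auto simp: h)
qed

lemma move_correct: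
  assumes "good N st" "move N st r kids" "map seq_of ts = map seqp kids"
  shows "correct_node (Node (seqp st, r) ts)"
proof -
  obtain G E L R k where st: "st = PS G E L R k" by (cases st)
  from assms st obtain k' where k: "k = Suc k'" by (cases k) auto
  have gd: "L \<subseteq> set_mset G" "R \<subseteq> set_mset E" using assms(1) st by auto
  from assms(2)[unfolded st k]
  consider (I) "r = Init" "kids = []" "axS L R"
    | (IL) A B where "r = ImpL" "Imp A B \<in> L" "kids = [PS (G - {#Imp A B#} + {#B#}) E (L - {Imp A B} \<union> {B}) R k',
              PS (G - {#Imp A B#}) ({#A#} + E) (L - {Imp A B}) (R \<union> {A}) k']"
    | (IR) A B where "r = ImpR" "Imp A B \<in> R" "kids = [PS (G + {#A#}) ({#B#} + (E - {#Imp A B#})) (L \<union> {A}) (R - {Imp A B} \<union> {B}) k']"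
    | (RF) B where "r = Refl" "Box B \<in> L" "kids = [PS (G - {#Box B#} + {#B#} + {#Box B#}) E (L \<union> {B}) R k']"
    | (BX) A k2 where "r = BoxR" "Box A \<in> R" "kids = [PS G ({#A#} + (E - {#Box A#})) L (R - {Box A} \<union> {A}) k',
              PS (filter_mset isbox G) {#A#} (boxes L) {A} k2]"
    by auto
  then show ?thesis
  proof cases
    case I
    then have ts: "ts = []" using assms(3) by simp
    from I(3) show ?thesis unfolding axS_def
    proof (elim disjE exE conjE)
      fix p assume "Atom p \<in> L" "Atom p \<in> R"
      then have "Atom p \<in># G" "Atom p \<in># E" using gd by auto
      then have "(G, E) = (G - {#Atom p#} + {#Atom p#}, {#Atom p#} + (E - {#Atom p#}))" by simp
      then show ?thesis using I ts st unfolding correct_node_def by (auto simp: Let_def; metis)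
    next
      assume "Bot \<in> L"
      then have "Bot \<in># G" using gd by auto
      then have "G = G - {#Bot#} + {#Bot#}" by simp
      then show ?thesis using I ts st unfolding correct_node_def by (auto simp: Let_def; metis)
    qed
  next
    case IL
    then have "Imp A B \<in># G" using gd by auto
    then have "G = G - {#Imp A B#} + {#Imp A B#}" by simp
    then show ?thesis using IL assms(3) st unfolding correct_node_def by (auto simp: Let_def; metis)
  next
    case IR
    then have "Imp A B \<in># E" using gd by auto
    then have "E = {#Imp A B#} + (E - {#Imp A B#})" by simp
    then show ?thesis using IR assms(3) st unfolding correct_node_def by (auto simp: Let_def; metis)
  next
    case RF
    then have "Box B \<in># G" using gd by auto
    then have "G = G - {#Box B#} + {#Box B#}" by simp
    then show ?thesis using RF assms(3) st unfolding correct_node_def by (auto simp: Let_def; metis)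
  next
    case BX
    then have "Box A \<in># E" using gd by auto
    then have e: "E = {#Box A#} + (E - {#Box A#})" by simp
    have g: "G = filter_mset (\<lambda>F. \<not> isbox F) G + image_mset Box (image_mset unbox (filter_mset isbox G))"
      unfolding image_unbox by (simp add: multiset_partition[symmetric])
    show ?thesis using BX assms(3) st unfolding correct_node_def Let_def
      apply simp
      apply (rule exI[of _ "filter_mset (\<lambda>F. \<not> isbox F) G"])
      apply (rule exI[of _ "image_mset unbox (filter_mset isbox G)"])
      apply (intro conjI)
      using e g image_unbox[of G] by (metis add_mset_add_single add.commute)+
  qed
qed

lemma exists_move:
  assumes "good N st" "N \<subseteq> (\<Union>k. Dk N k)"
  shows "\<exists>r kids. move N st r kids"
proof -
  obtain G E L R k where st: "st = PS G E L R k" by (cases st)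
  from assms st obtain k' where k: "k = Suc k'" by (cases k) auto
  have so: "step_ok N (Dk N k') L R" using assms(1) st k by auto
  have "\<exists>r kids. move N (PS G E L R (Suc k')) r kids" using so unfolding step_ok_def
  proof (elim disjE exE conjE)
    assume "axS L R" then have "move N (PS G E L R (Suc k')) Init []" by simp
    then show ?thesis by blast
  next
    fix A B assume a: "Imp A B \<in> L" "(L - {Imp A B} \<union> {B}, R) \<in> Dk N k'" "(L - {Imp A B}, R \<union> {A}) \<in> Dk N k'"
    then have "move N (PS G E L R (Suc k')) ImpL [PS (G - {#Imp A B#} + {#B#}) E (L - {Imp A B} \<union> {B}) R k',
              PS (G - {#Imp A B#}) ({#A#} + E) (L - {Imp A B}) (R \<union> {A}) k']" by (simp only: move.simps nat.case) blast
    then show ?thesis by blast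
  next
    fix A B assume a: "Imp A B \<in> R" "(L \<union> {A}, R - {Imp A B} \<union> {B}) \<in> Dk N k'"
    then have "move N (PS G E L R (Suc k')) ImpR [PS (G + {#A#}) ({#B#} + (E - {#Imp A B#})) (L \<union> {A}) (R - {Imp A B} \<union> {B}) k']" by (simp only: move.simps nat.case) blast
    then show ?thesis by blast
  next
    fix B assume a: "Box B \<in> L" "(L \<union> {B}, R) \<in> Dk N k'"
    then have "move N (PS G E L R (Suc k')) Refl [PS (G - {#Box B#} + {#B#} + {#Box B#}) E (L \<union> {B}) R k']" by (simp only: move.simps nat.case) blast
    then show ?thesis by blast
  next
    fix A assume a: "Box A \<in> R" "(L, R - {Box A} \<union> {A}) \<in> Dk N k'" "(boxes L, {A}) \<in> N"
    then obtain k2 where "(boxes L, {A}) \<in> Dk N k2" using assms(2) by blast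
    then have "move N (PS G E L R (Suc k')) BoxR [PS G ({#A#} + (E - {#Box A#})) L (R - {Box A} \<union> {A}) k',
              PS (filter_mset isbox G) {#A#} (boxes L) {A} k2]" using a by (simp only: move.simps nat.case) blast
    then show ?thesis by blast
  qed
  then show ?thesis using st k by simp
qed


definition mvc :: "'a ss set \<Rightarrow> 'a pst \<Rightarrow> rule \<times> 'a pst list" where
  "mvc N st = (SOME rk. move N st (fst rk) (snd rk))"

definition btree :: "'a ss set \<Rightarrow> 'a pst \<Rightarrow> 'a dtree" where
  "btree N = bld (\<lambda>st. (seqp st, fst (mvc N st))) (\<lambda>st. snd (mvc N st))"

lemma mvc_move:
  assumes "good N st" "N \<subseteq> (\<Union>k. Dk N k)"
  shows "move N st (fst (mvc N st)) (snd (mvc N st))"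
proof -
  obtain r kids where "move N st r kids" using exists_move[OF assms] by blast
  then have "\<exists>rk. move N st (fst rk) (snd rk)" by (intro exI[of _ "(r,kids)"]) simp
  then show ?thesis unfolding mvc_def by (rule someI_ex)
qed

lemma btree_sel: "lbl (btree N st) = (seqp st, fst (mvc N st))"
  "subs (btree N st) = map (btree N) (snd (mvc N st))"
  unfolding btree_def by simp_all

lemma sub_btree:
  assumes "good N st" "N \<subseteq> (\<Union>k. Dk N k)" "sub (btree N st) p = Some t"
  shows "t = btree N (stp (\<lambda>st. snd (mvc N st)) st p) \<and> good N (stp (\<lambda>st. snd (mvc N st)) st p)"
  using assms
proof (induction p arbitrary: st)
  case Nil then show ?case by simp
next
  case (Cons i p)
  have mv: "move N st (fst (mvc N st)) (snd (mvc N st))" using mvc_move Cons.prems by blast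
  from Cons.prems(3) have i: "i < length (snd (mvc N st))"
    and s: "sub (btree N (snd (mvc N st) ! i)) p = Some t"
    by (auto simp: btree_sel split: if_splits)
  have "good N (snd (mvc N st) ! i)" using good_kids[OF Cons.prems(1) mv] i by auto
  from Cons.IH[OF this Cons.prems(2) s] show ?case by simp
qed

lemma kid_dec:
  assumes "good N st" "move N st r kids" "i < length kids" "\<not> (r = BoxR \<and> i = 1)"
  shows "kp (kids ! i) < kp st"
proof -
  obtain G E L R k where st: "st = PS G E L R k" by (cases st)
  from assms st obtain k' where k: "k = Suc k'" by (cases k) auto
  have "kp (kids ! i) < Suc k'"
    using assms(2-4) unfolding st k move.simps nat.case
    by (elim disjE exE conjE) (auto simp: less_Suc_eq nth_Cons')
  then show ?thesis by (simp add: st k)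
qed

lemma move_not_cut: "move N st r kids \<Longrightarrow> r \<noteq> Cut"
  by (cases st) (auto split: nat.splits)

lemma btree_proof:
  assumes "good N st" "N \<subseteq> (\<Union>k. Dk N k)"
  shows "is_proof (btree N st) \<and> (\<forall>p s. sub (btree N st) p = Some s \<longrightarrow> rule_of s \<noteq> Cut)"
proof -
  let ?ks = "\<lambda>st. snd (mvc N st)"
  let ?t = "btree N st"
  have cor: "correct_node s \<and> rule_of s \<noteq> Cut" if "sub ?t p = Some s" for p s
  proof -
    let ?c = "stp ?ks st p"
    from sub_btree[OF assms that] have s: "s = btree N ?c" and g: "good N ?c" by auto
    have mv: "move N ?c (fst (mvc N ?c)) (snd (mvc N ?c))" using mvc_move[OF g assms(2)] .
    have "map seq_of (subs s) = map seqp (snd (mvc N ?c))"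
      by (simp add: s btree_sel btree_def)
    then have "correct_node (Node (seqp ?c, fst (mvc N ?c)) (subs s))"
      by (rule move_correct[OF g mv])
    moreover have "s = Node (seqp ?c, fst (mvc N ?c)) (subs s)"
      by (metis btree_sel(1) ptree.collapse s)
    ultimately show ?thesis using move_not_cut[OF mv] s btree_sel(1)[of N ?c] by auto
  qed
  have br: "infinite {k. \<exists>s. sub ?t (map f [0..<k]) = Some s \<and> box_right s (f k)}"
    if ib: "inf_branch ?t f" for f
  proof
    assume fin: "finite {k. \<exists>s. sub ?t (map f [0..<k]) = Some s \<and> box_right s (f k)}"
    define \<sigma> where "\<sigma> k = stp ?ks st (map f [0..<k])" for k
    have subk: "sub ?t (map f [0..<k]) = Some (btree N (\<sigma> k)) \<and> good N (\<sigma> k)" for k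
    proof (cases k)
      case 0 then show ?thesis using assms(1) by (simp add: \<sigma>_def)
    next
      case (Suc k')
      then obtain s where "sub ?t (map f [0..<k]) = Some s" using ib unfolding inf_branch_def by auto
      with sub_btree[OF assms this] show ?thesis by (simp add: \<sigma>_def)
    qed
    have step: "f k < length (?ks (\<sigma> k)) \<and> \<sigma> (Suc k) = ?ks (\<sigma> k) ! f k" for k
    proof -
      obtain u where u: "sub ?t (map f [0..<k] @ [f k]) = Some u"
        using ib unfolding inf_branch_def map_upt_Suc by blast
      from sub_snoc_Some[OF u] subk[of k] have "f k < length (subs (btree N (\<sigma> k)))" by auto
      then show ?thesis by (simp add: btree_sel \<sigma>_def stp_snoc)
    qed
    from fin obtain K where K0: "\<forall>k\<in>{k. \<exists>s. sub ?t (map f [0..<k]) = Some s \<and> box_right s (f k)}. k < K"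
      unfolding finite_nat_set_iff_bounded by blast
    have K: "\<forall>k\<ge>K. \<not> (\<exists>s. sub ?t (map f [0..<k]) = Some s \<and> box_right s (f k))"
    proof (intro allI impI)
      fix k assume "K \<le> k"
      then show "\<not> (\<exists>s. sub ?t (map f [0..<k]) = Some s \<and> box_right s (f k))" using K0 by force
    qed
    have dec: "kp (\<sigma> (Suc k)) < kp (\<sigma> k)" if "k \<ge> K" for k
    proof -
      have nb: "\<not> box_right (btree N (\<sigma> k)) (f k)" using K that subk by blast
      have mv: "move N (\<sigma> k) (fst (mvc N (\<sigma> k))) (?ks (\<sigma> k))" using mvc_move subk assms(2) by blast
      have "\<not> (fst (mvc N (\<sigma> k)) = BoxR \<and> f k = 1)"
        using nb step[of k] by (auto simp: box_right_def btree_sel)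
      from kid_dec[OF _ mv _ this] subk step show ?thesis by auto
    qed
    have "kp (\<sigma> (K + m)) + m \<le> kp (\<sigma> K)" for m
    proof (induction m)
      case (Suc m) then show ?case using dec[of "K + m"] by simp
    qed simp
    from this[of "Suc (kp (\<sigma> K))"] show False by simp
  qed
  show ?thesis using cor br unfolding is_proof_def by blast
qed

lemma cutfree_exists:
  assumes "N \<subseteq> (\<Union>k. Dk N k)" "(L,R) \<in> N" "L \<subseteq> set_mset G" "R \<subseteq> set_mset E"
  shows "\<exists>t. proof_of t (G,E) \<and> (\<forall>p s. sub t p = Some s \<longrightarrow> rule_of s \<noteq> Cut)"
proof -
  obtain k where k: "(L,R) \<in> Dk N k" using assms by blast
  have g: "good N (PS G E L R k)" using k assms by simp
  show ?thesis using btree_proof[OF g assms(1)] unfolding proof_of_def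
    by (intro exI[of _ "btree N (PS G E L R k)"]) (simp add: btree_sel)
qed


definition mu :: "'a ss set \<Rightarrow> 'a ss set" where
  "mu P = (\<Union>k. Dk P k)"

lemma step_ok_mono: "P \<subseteq> P' \<Longrightarrow> X \<subseteq> X' \<Longrightarrow> step_ok P X L R \<Longrightarrow> step_ok P' X' L R"
  unfolding step_ok_def by blast

lemma Dk_mono_k: "Dk P k \<subseteq> Dk P (Suc k)"
proof (induction k)
  case 0 then show ?case by simp
next
  case (Suc k)
  show ?case
  proof
    fix x assume "x \<in> Dk P (Suc k)"
    then obtain L R where x: "x = (L,R)" "step_ok P (Dk P k) L R" by (cases x) simp
    then have "step_ok P (Dk P (Suc k)) L R" using step_ok_mono[OF order.refl Suc.IH] by blast
    then show "x \<in> Dk P (Suc (Suc k))" using x by simp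
  qed
qed

lemma Dk_mono_le: "k \<le> k' \<Longrightarrow> Dk P k \<subseteq> Dk P k'"
proof (induction k' rule: dec_induct)
  case base show ?case by (rule order.refl)
next
  case (step n) show ?case using step.IH Dk_mono_k[of P n] by (rule order.trans)
qed

lemma Dk_mono_P: assumes "P \<subseteq> P'" shows "Dk P k \<subseteq> Dk P' k"
proof (induction k)
  case 0 then show ?case by simp
next
  case (Suc k)
  show ?case
  proof
    fix x assume "x \<in> Dk P (Suc k)"
    then obtain L R where x: "x = (L,R)" "step_ok P (Dk P k) L R" by (cases x) simp
    then have "step_ok P' (Dk P' k) L R" using step_ok_mono[OF assms Suc.IH] by blast
    then show "x \<in> Dk P' (Suc k)" using x by simp
  qed
qed

lemma mu_mono: assumes "P \<subseteq> P'" shows "mu P \<subseteq> mu P'"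
proof
  fix x assume "x \<in> mu P"
  then obtain k where "x \<in> Dk P k" unfolding mu_def by blast
  then have "x \<in> Dk P' k" using Dk_mono_P[OF assms, of k] by blast
  then show "x \<in> mu P'" unfolding mu_def by blast
qed

lemma mu_unfold: "step_ok P (mu P) L R \<Longrightarrow> (L,R) \<in> mu P"
proof -
  assume a: "step_ok P (mu P) L R"
  have fin: "\<exists>k. X \<subseteq> Dk P k" if "finite X" "X \<subseteq> mu P" for X
    using that
  proof (induction X rule: finite_induct)
    case empty then show ?case by simp
  next
    case (insert x F)
    then obtain k where k: "F \<subseteq> Dk P k" by auto
    from insert obtain k2 where k2: "x \<in> Dk P k2" unfolding mu_def by auto
    show ?case using k k2 Dk_mono_le[of k "max k k2" P] Dk_mono_le[of k2 "max k k2" P]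
      by (intro exI[of _ "max k k2"]) auto
  qed
  have "\<exists>k. step_ok P (Dk P k) L R" using a[unfolded step_ok_def]
  proof (elim disjE exE conjE)
    assume "axS L R" then show ?thesis unfolding step_ok_def by blast
  next
    fix A B assume h: "Imp A B \<in> L" "(L - {Imp A B} \<union> {B}, R) \<in> mu P" "(L - {Imp A B}, R \<union> {A}) \<in> mu P"
    then obtain k where "{(L - {Imp A B} \<union> {B}, R), (L - {Imp A B}, R \<union> {A})} \<subseteq> Dk P k"
      using fin[of "{(L - {Imp A B} \<union> {B}, R), (L - {Imp A B}, R \<union> {A})}"] by auto
    then have "step_ok P (Dk P k) L R" using h(1) unfolding step_ok_def by blast
    then show ?thesis by blast
  next
    fix A B assume h: "Imp A B \<in> R" "(L \<union> {A}, R - {Imp A B} \<union> {B}) \<in> mu P"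
    then obtain k where "(L \<union> {A}, R - {Imp A B} \<union> {B}) \<in> Dk P k" unfolding mu_def by blast
    then have "step_ok P (Dk P k) L R" using h(1) unfolding step_ok_def by blast
    then show ?thesis by blast
  next
    fix B assume h: "Box B \<in> L" "(L \<union> {B}, R) \<in> mu P"
    then obtain k where "(L \<union> {B}, R) \<in> Dk P k" unfolding mu_def by blast
    then have "step_ok P (Dk P k) L R" using h(1) unfolding step_ok_def by blast
    then show ?thesis by blast
  next
    fix A assume h: "Box A \<in> R" "(L, R - {Box A} \<union> {A}) \<in> mu P" "(boxes L, {A}) \<in> P"
    then obtain k where "(L, R - {Box A} \<union> {A}) \<in> Dk P k" unfolding mu_def by blast
    then have "step_ok P (Dk P k) L R" using h(1,3) unfolding step_ok_def by blast
    then show ?thesis by blast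
  qed
  then obtain k where "step_ok P (Dk P k) L R" by blast
  then have "(L,R) \<in> Dk P (Suc k)" by simp
  then show ?thesis unfolding mu_def by blast
qed

lemma mu_fold: "(L,R) \<in> mu P \<Longrightarrow> step_ok P (mu P) L R"
proof -
  assume "(L,R) \<in> mu P"
  then obtain k where k: "(L,R) \<in> Dk P k" unfolding mu_def by blast
  then obtain k' where "k = Suc k'" by (cases k) simp_all
  with k have "step_ok P (Dk P k') L R" by simp
  moreover have "Dk P k' \<subseteq> mu P" unfolding mu_def by blast
  ultimately show ?thesis using step_ok_mono[OF order.refl] by blast
qed

definition UC :: "'a fm set \<Rightarrow> 'a ss set" where
  "UC C = {(L,R). L \<subseteq> C \<and> R \<subseteq> C}"

fun PP :: "'a fm set \<Rightarrow> nat \<Rightarrow> 'a ss set" where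
  "PP C 0 = UC C"
| "PP C (Suc j) = mu (PP C j) \<inter> UC C"

lemma PP_dec: "PP C (Suc j) \<subseteq> PP C j"
proof (induction j)
  case 0 then show ?case by simp
next
  case (Suc j)
  have "mu (PP C (Suc j)) \<subseteq> mu (PP C j)" by (rule mu_mono[OF Suc.IH])
  then show ?case by (simp only: PP.simps) blast
qed

lemma PP_sub: "PP C j \<subseteq> UC C"
  by (cases j) auto

lemma finite_UC: "finite C \<Longrightarrow> finite (UC C)"
proof -
  assume "finite C"
  then have "finite (Pow C \<times> Pow C)" by simp
  moreover have "UC C \<subseteq> Pow C \<times> Pow C" unfolding UC_def by auto
  ultimately show ?thesis by (rule finite_subset[rotated])
qed

lemma PP_stable:
  assumes "finite C"
  shows "\<exists>J. PP C (Suc J) = PP C J"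
proof (rule ccontr)
  assume "\<not> ?thesis"
  then have ne: "PP C (Suc j) \<subset> PP C j" for j using PP_dec by blast
  have fin: "finite (PP C j)" for j using finite_subset[OF PP_sub finite_UC[OF assms]] .
  have "card (PP C j) + j \<le> card (PP C 0)" for j
  proof (induction j)
    case (Suc j)
    have "card (PP C (Suc j)) < card (PP C j)" using psubset_card_mono[OF fin ne] .
    then show ?case using Suc by linarith
  qed simp
  from this[of "Suc (card (PP C 0))"] show False by linarith
qed

primrec sf :: "'a fm \<Rightarrow> 'a fm set" where
  "sf Bot = {Bot}"
| "sf (Atom p) = {Atom p}"
| "sf (Imp A B) = insert (Imp A B) (sf A \<union> sf B)"
| "sf (Box A) = insert (Box A) (sf A)"

lemma finite_sf: "finite (sf F)" by (induction F) auto

lemma sf_self: "F \<in> sf F" by (cases F) auto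

lemma sf_closed: "Imp A B \<in> sf F \<Longrightarrow> A \<in> sf F \<and> B \<in> sf F" "Box A \<in> sf F \<Longrightarrow> A \<in> sf F"
  by (induction F) (auto simp: sf_self)

definition closedC :: "'a fm set \<Rightarrow> bool" where
  "closedC C \<longleftrightarrow> finite C \<and> (\<forall>A B. Imp A B \<in> C \<longrightarrow> A \<in> C \<and> B \<in> C) \<and> (\<forall>A. Box A \<in> C \<longrightarrow> A \<in> C)"

lemma closedC_sf: "finite X \<Longrightarrow> closedC (\<Union>F\<in>X. sf F)"
  unfolding closedC_def
  apply (intro conjI allI impI)
  subgoal by (simp add: finite_sf)
  subgoal by (meson UN_iff sf_closed(1))
  subgoal by (meson UN_iff sf_closed(1))
  subgoal by (meson UN_iff sf_closed(2))
  done


definition refuted :: "'a fm set \<Rightarrow> nat \<Rightarrow> 'a fm set \<Rightarrow> 'a fm set \<Rightarrow> bool" where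
  "refuted C j L R \<longleftrightarrow> (L,R) \<in> UC C \<and> (L,R) \<notin> mu (PP C j)"

definition Inv :: "'a fm set \<Rightarrow> 'a fm set \<Rightarrow> 'a fm set \<Rightarrow> 'a fm set \<Rightarrow> 'a fm set \<Rightarrow> bool" where
  "Inv C L R HL HR \<longleftrightarrow> L \<subseteq> HL \<and> R \<subseteq> HR \<and> HL \<subseteq> C \<and> HR \<subseteq> C \<and>
     (\<forall>p. Atom p \<in> HL \<longrightarrow> Atom p \<in> L) \<and> (Bot \<in> HL \<longrightarrow> Bot \<in> L) \<and>
     (\<forall>B. Box B \<in> HL \<longrightarrow> Box B \<in> L) \<and> (\<forall>p. Atom p \<in> HR \<longrightarrow> Atom p \<in> R) \<and>
     (\<forall>A B. Imp A B \<in> HL \<longrightarrow> Imp A B \<in> L \<or> B \<in> HL \<or> A \<in> HR) \<and>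
     (\<forall>A B. Imp A B \<in> HR \<longrightarrow> Imp A B \<in> R \<or> (A \<in> HL \<and> B \<in> HR)) \<and>
     (\<forall>A. Box A \<in> HR \<longrightarrow> Box A \<in> R \<or> A \<in> HR)"

definition Sat :: "'a fm set \<Rightarrow> nat \<Rightarrow> 'a fm set \<Rightarrow> 'a fm set \<Rightarrow> 'a fm set \<Rightarrow> bool" where
  "Sat C j L R HL \<longleftrightarrow> (\<forall>A B. Imp A B \<notin> L) \<and> (\<forall>A B. Imp A B \<notin> R) \<and>
     (\<forall>B. Box B \<in> L \<longrightarrow> B \<in> HL) \<and>
     (\<forall>A. Box A \<in> R \<longrightarrow> (L, R - {Box A} \<union> {A}) \<in> mu (PP C j))"

datatype 'a wld = Wd (wLf: "'a fm set") (wRf: "'a fm set") (wHL: "'a fm set") (wHR: "'a fm set") (wlv: nat)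

definition wc :: "'a fm set \<Rightarrow> 'a wld \<Rightarrow> bool" where
  "wc C w \<longleftrightarrow> refuted C (wlv w) (wLf w) (wRf w) \<and> Inv C (wLf w) (wRf w) (wHL w) (wHR w)
     \<and> Sat C (wlv w) (wLf w) (wRf w) (wHL w)"

primrec fsz :: "'a fm \<Rightarrow> nat" where
  "fsz Bot = 1" | "fsz (Atom p) = 1" | "fsz (Imp A B) = fsz A + fsz B + 1" | "fsz (Box A) = fsz A + 1"

definition wt :: "'a fm set \<Rightarrow> nat" where
  "wt X = (\<Sum>F\<in>X. 2 ^ fsz F)"

lemma fsz_pos: "fsz F \<ge> 1" by (cases F) auto

lemma pow_imp: "(2::nat) ^ fsz A + 2 ^ fsz B < 2 ^ fsz (Imp A B)"
proof -
  define x where "x = (2::nat) ^ fsz A"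
  define y where "y = (2::nat) ^ fsz B"
  have a: "x \<ge> 2" "y \<ge> 2" unfolding x_def y_def
    using fsz_pos[of A] fsz_pos[of B] power_increasing[of 1 _ "2::nat"] by auto
  have e: "(2::nat) ^ fsz (Imp A B) = 2 * (x * y)" by (simp add: power_add x_def y_def)
  have "x * y \<ge> 2 * y" using mult_le_mono1[OF a(1)] .
  moreover have "x * y \<ge> x * 2" using mult_le_mono2[OF a(2)] .
  ultimately have "x + y < 2 * (x * y)" using a by linarith
  then show ?thesis using e x_def y_def by simp
qed

lemma pow_box: "(2::nat) ^ fsz A < 2 ^ fsz (Box A)"
  by simp

lemma wt_ins: "finite X \<Longrightarrow> wt (X \<union> {b}) \<le> wt X + 2 ^ fsz b"
  unfolding wt_def by (cases "b \<in> X") (auto simp: insert_absorb)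

lemma wt_diff: "finite X \<Longrightarrow> a \<in> X \<Longrightarrow> wt (X - {a}) + 2 ^ fsz a = wt X"
  unfolding wt_def by (simp add: sum.remove[of X a])

lemma wt_mono: "finite Y \<Longrightarrow> X \<subseteq> Y \<Longrightarrow> wt X \<le> wt Y"
  unfolding wt_def by (rule sum_mono2) auto

lemma Inv_IL1: "Inv C L R HL HR \<Longrightarrow> Imp A B \<in> L \<Longrightarrow> B \<in> C \<Longrightarrow> Inv C (L - {Imp A B} \<union> {B}) R (HL \<union> {B}) HR"
  unfolding Inv_def by auto

lemma Inv_IL2: "Inv C L R HL HR \<Longrightarrow> Imp A B \<in> L \<Longrightarrow> A \<in> C \<Longrightarrow> Inv C (L - {Imp A B}) (R \<union> {A}) HL (HR \<union> {A})"
  unfolding Inv_def by auto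

lemma Inv_IR: "Inv C L R HL HR \<Longrightarrow> Imp A B \<in> R \<Longrightarrow> A \<in> C \<Longrightarrow> B \<in> C \<Longrightarrow>
    Inv C (L \<union> {A}) (R - {Imp A B} \<union> {B}) (HL \<union> {A}) (HR \<union> {B})"
  unfolding Inv_def by auto

lemma Inv_RF: "Inv C L R HL HR \<Longrightarrow> Box B \<in> L \<Longrightarrow> B \<in> C \<Longrightarrow> Inv C (L \<union> {B}) R (HL \<union> {B}) HR"
  unfolding Inv_def by auto

lemma Inv_BX: "Inv C L R HL HR \<Longrightarrow> Box A \<in> R \<Longrightarrow> A \<in> C \<Longrightarrow> Inv C L (R - {Box A} \<union> {A}) HL (HR \<union> {A})"
  unfolding Inv_def by auto

lemma Inv_init: "L \<subseteq> C \<Longrightarrow> R \<subseteq> C \<Longrightarrow> Inv C L R L R"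
  unfolding Inv_def by auto

definition Mm :: "'a fm set \<Rightarrow> 'a fm set \<Rightarrow> 'a fm set \<Rightarrow> 'a fm set \<Rightarrow> nat" where
  "Mm C L R HL = card ({B. Box B \<in> C} - HL) * (2 * wt C + 1) + (wt L + wt R)"

lemma finite_boxpre: "finite C \<Longrightarrow> finite {B. Box B \<in> C}"
proof -
  assume f: "finite C"
  have "inj Box" by (auto simp: inj_def)
  then have "finite (Box -` C)" using finite_vimageI[OF f] by blast
  moreover have "{B. Box B \<in> C} = Box -` C" by auto
  ultimately show ?thesis by simp
qed

lemma closedC_sub: "closedC C \<Longrightarrow> Imp A B \<in> C \<Longrightarrow> A \<in> C \<and> B \<in> C"
  "closedC C \<Longrightarrow> Box A \<in> C \<Longrightarrow> A \<in> C"
  unfolding closedC_def by blast+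

lemma sat_exists:
  assumes cC: "closedC C"
  shows "refuted C j L R \<Longrightarrow> Inv C L R HL HR \<Longrightarrow>
    \<exists>w. wc C w \<and> wlv w = j \<and> boxes L \<subseteq> wLf w \<and> HL \<subseteq> wHL w \<and> HR \<subseteq> wHR w"
proof (induction "Mm C L R HL" arbitrary: L R HL HR rule: less_induct)
  case less
  let ?P = "PP C j"
  have fC: "finite C" using cC closedC_def by blast
  have LC: "L \<subseteq> C" "R \<subseteq> C" using less.prems(1) by (auto simp: refuted_def UC_def)
  have fL: "finite L" "finite R" using LC fC finite_subset by blast+
  have nst: "\<not> step_ok ?P (mu ?P) L R" using less.prems(1) mu_unfold[of ?P L R] refuted_def by blast
  define K where "K = 2 * wt C + 1"
  define m1 where "m1 H = card ({B. Box B \<in> C} - H)" for H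
  have fB: "finite {B. Box B \<in> C}" using finite_boxpre[OF fC] .
  have Mdef: "Mm C L' R' H = m1 H * K + (wt L' + wt R')" for L' R' H by (simp add: Mm_def m1_def K_def)
  have m1mono: "m1 H' \<le> m1 H" if "H \<subseteq> H'" for H H'
    unfolding m1_def using that fB by (intro card_mono) auto
  have dec1: "Mm C L' R' HL' < Mm C L R HL" if "HL \<subseteq> HL'" "wt L' + wt R' < wt L + wt R" for L' R' HL'
  proof -
    have "m1 HL' * K \<le> m1 HL * K" using m1mono[OF that(1)] by simp
    then show ?thesis unfolding Mdef using that(2) by linarith
  qed
  have dec2: "Mm C L' R' HL' < Mm C L R HL" if "m1 HL' < m1 HL" "L' \<subseteq> C" "R' \<subseteq> C" for L' R' HL'
  proof -
    have "wt L' \<le> wt C" "wt R' \<le> wt C" using wt_mono[OF fC] that(2,3) by auto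
    then have "wt L' + wt R' < K" unfolding K_def by linarith
    moreover have "(m1 HL' + 1) * K \<le> m1 HL * K" using that(1) by (intro mult_le_mono1) simp
    ultimately show ?thesis unfolding Mdef by simp
  qed
  have cont: "\<exists>w. wc C w \<and> wlv w = j \<and> boxes L \<subseteq> wLf w \<and> HL \<subseteq> wHL w \<and> HR \<subseteq> wHR w"
    if h: "refuted C j L' R'" "Inv C L' R' HL' HR'" "Mm C L' R' HL' < Mm C L R HL"
       "boxes L \<subseteq> boxes L'" "HL \<subseteq> HL'" "HR \<subseteq> HR'" for L' R' HL' HR'
  proof -
    obtain w where w: "wc C w" "wlv w = j" "boxes L' \<subseteq> wLf w" "HL' \<subseteq> wHL w" "HR' \<subseteq> wHR w"
      using less.hyps[OF h(3) h(1) h(2)] by blast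
    show ?thesis
      by (rule exI[of _ w]) (use w h(4-6) in blast)
  qed
  consider (IL) A B where "Imp A B \<in> L" | (IR) A B where "Imp A B \<in> R"
    | (RF) B where "Box B \<in> L" "B \<notin> HL"
    | (BX) A where "Box A \<in> R" "(L, R - {Box A} \<union> {A}) \<notin> mu ?P"
    | (S) "Sat C j L R HL" unfolding Sat_def by blast
  then show ?case
  proof cases
    case IL
    have AB: "A \<in> C" "B \<in> C" using closedC_sub(1)[OF cC] IL LC by blast+
    have bx1: "boxes L \<subseteq> boxes (L - {Imp A B} \<union> {B})" "boxes L \<subseteq> boxes (L - {Imp A B})"
      unfolding boxes_def by auto
    have wd: "wt (L - {Imp A B}) + 2 ^ fsz (Imp A B) = wt L" using wt_diff[OF fL(1) IL] .
    have pi: "(2::nat) ^ fsz A + 2 ^ fsz B < 2 ^ fsz (Imp A B)" by (rule pow_imp)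
    have "(L - {Imp A B} \<union> {B}, R) \<notin> mu ?P \<or> (L - {Imp A B}, R \<union> {A}) \<notin> mu ?P"
      using nst IL unfolding step_ok_def by blast
    then show ?thesis
    proof
      assume n: "(L - {Imp A B} \<union> {B}, R) \<notin> mu ?P"
      have r: "refuted C j (L - {Imp A B} \<union> {B}) R" using n LC AB by (auto simp: refuted_def UC_def)
      have i: "Inv C (L - {Imp A B} \<union> {B}) R (HL \<union> {B}) HR" by (rule Inv_IL1[OF less.prems(2) IL AB(2)])
      have "wt (L - {Imp A B} \<union> {B}) \<le> wt (L - {Imp A B}) + 2 ^ fsz B" using wt_ins[of "L - {Imp A B}" B] fL by simp
      then have d: "Mm C (L - {Imp A B} \<union> {B}) R (HL \<union> {B}) < Mm C L R HL"
        using wd pi by (intro dec1) auto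
      show ?thesis by (rule cont[OF r i d bx1(1)]) auto
    next
      assume n: "(L - {Imp A B}, R \<union> {A}) \<notin> mu ?P"
      have r: "refuted C j (L - {Imp A B}) (R \<union> {A})" using n LC AB by (auto simp: refuted_def UC_def)
      have i: "Inv C (L - {Imp A B}) (R \<union> {A}) HL (HR \<union> {A})" by (rule Inv_IL2[OF less.prems(2) IL AB(1)])
      have "wt (R \<union> {A}) \<le> wt R + 2 ^ fsz A" using wt_ins[of R A] fL by simp
      then have d: "Mm C (L - {Imp A B}) (R \<union> {A}) HL < Mm C L R HL"
        using wd pi by (intro dec1) auto
      show ?thesis by (rule cont[OF r i d bx1(2)]) auto
    qed
  next
    case IR
    have AB: "A \<in> C" "B \<in> C" using closedC_sub(1)[OF cC] IR LC by blast+
    have bx1: "boxes L \<subseteq> boxes (L \<union> {A})" unfolding boxes_def by auto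
    have wd: "wt (R - {Imp A B}) + 2 ^ fsz (Imp A B) = wt R" using wt_diff[OF fL(2) IR] .
    have pi: "(2::nat) ^ fsz A + 2 ^ fsz B < 2 ^ fsz (Imp A B)" by (rule pow_imp)
    have n: "(L \<union> {A}, R - {Imp A B} \<union> {B}) \<notin> mu ?P"
      using nst IR unfolding step_ok_def by blast
    have r: "refuted C j (L \<union> {A}) (R - {Imp A B} \<union> {B})" using n LC AB by (auto simp: refuted_def UC_def)
    have i: "Inv C (L \<union> {A}) (R - {Imp A B} \<union> {B}) (HL \<union> {A}) (HR \<union> {B})"
      by (rule Inv_IR[OF less.prems(2) IR AB])
    have "wt (L \<union> {A}) \<le> wt L + 2 ^ fsz A" "wt (R - {Imp A B} \<union> {B}) \<le> wt (R - {Imp A B}) + 2 ^ fsz B"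
      using wt_ins[of L A] wt_ins[of "R - {Imp A B}" B] fL by simp_all
    then have d: "Mm C (L \<union> {A}) (R - {Imp A B} \<union> {B}) (HL \<union> {A}) < Mm C L R HL"
      using wd pi by (intro dec1) auto
    show ?thesis by (rule cont[OF r i d bx1]) auto
  next
    case RF
    have BC: "B \<in> C" using closedC_sub(2)[OF cC] RF LC by blast
    have bx1: "boxes L \<subseteq> boxes (L \<union> {B})" unfolding boxes_def by auto
    have n: "(L \<union> {B}, R) \<notin> mu ?P" using nst RF unfolding step_ok_def by blast
    have r: "refuted C j (L \<union> {B}) R" using n LC BC by (auto simp: refuted_def UC_def)
    have i: "Inv C (L \<union> {B}) R (HL \<union> {B}) HR" by (rule Inv_RF[OF less.prems(2) RF(1) BC])
    have "m1 (HL \<union> {B}) < m1 HL" unfolding m1_def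
    proof (rule psubset_card_mono)
      show "finite ({B. Box B \<in> C} - HL)" using fB by simp
      show "{B. Box B \<in> C} - (HL \<union> {B}) \<subset> {B. Box B \<in> C} - HL" using RF LC by auto
    qed
    then have d: "Mm C (L \<union> {B}) R (HL \<union> {B}) < Mm C L R HL"
      using LC BC by (intro dec2) auto
    show ?thesis by (rule cont[OF r i d bx1]) auto
  next
    case BX
    have AC: "A \<in> C" using closedC_sub(2)[OF cC] BX LC by blast
    have r: "refuted C j L (R - {Box A} \<union> {A})" using BX LC AC by (auto simp: refuted_def UC_def)
    have i: "Inv C L (R - {Box A} \<union> {A}) HL (HR \<union> {A})" by (rule Inv_BX[OF less.prems(2) BX(1) AC])
    have wd: "wt (R - {Box A}) + 2 ^ fsz (Box A) = wt R" using wt_diff[OF fL(2) BX(1)] .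
    have "wt (R - {Box A} \<union> {A}) \<le> wt (R - {Box A}) + 2 ^ fsz A" using wt_ins[of "R - {Box A}" A] fL by simp
    moreover have "(0::nat) < 2 ^ fsz A" by simp
    moreover have "(2::nat) ^ fsz (Box A) = 2 * 2 ^ fsz A" by simp
    ultimately have "wt L + wt (R - {Box A} \<union> {A}) < wt L + wt R" using wd by linarith
    then have d: "Mm C L (R - {Box A} \<union> {A}) HL < Mm C L R HL" by (rule dec1[OF order.refl])
    show ?thesis by (rule cont[OF r i d]) auto
  next
    case S
    have "wc C (Wd L R HL HR j)" using S less.prems unfolding wc_def by simp
    moreover have "boxes L \<subseteq> L" unfolding boxes_def by auto
    ultimately show ?thesis by (intro exI[of _ "Wd L R HL HR j"]) simp
  qed
qed


definition Rel :: "'a wld \<Rightarrow> 'a wld \<Rightarrow> bool" where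
  "Rel w v \<longleftrightarrow> w = v \<or> (boxes (wLf w) \<subseteq> boxes (wLf v) \<and> wlv v < wlv w)"

primrec Tr :: "'a fm \<Rightarrow> 'a fm set \<Rightarrow> 'a wld \<Rightarrow> bool" where
  "Tr Bot C w = False"
| "Tr (Atom p) C w = (Atom p \<in> wHL w)"
| "Tr (Imp A B) C w = (Tr A C w \<longrightarrow> Tr B C w)"
| "Tr (Box A) C w = (\<forall>v. wc C v \<longrightarrow> Rel w v \<longrightarrow> Tr A C v)"

lemma Rel_trans: "Rel w v \<Longrightarrow> Rel v u \<Longrightarrow> Rel w u"
  unfolding Rel_def by auto

lemma refuted_not_ax: "refuted C j L R \<Longrightarrow> \<not> axS L R"
  unfolding refuted_def using mu_unfold step_ok_def by blast

lemma truth: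
  assumes cC: "closedC C"
  shows "wc C w \<Longrightarrow> (F \<in> wHL w \<longrightarrow> Tr F C w) \<and> (F \<in> wHR w \<longrightarrow> \<not> Tr F C w)"
proof (induction F arbitrary: w)
  case Bot
  then have "Bot \<in> wHL w \<longrightarrow> Bot \<in> wLf w" unfolding wc_def Inv_def by blast
  then show ?case using Bot refuted_not_ax[of C "wlv w" "wLf w" "wRf w"] unfolding wc_def axS_def by auto
next
  case (Atom p)
  have "Atom p \<in> wHL w \<longrightarrow> Atom p \<in> wLf w" "Atom p \<in> wHR w \<longrightarrow> Atom p \<in> wRf w"
    using Atom unfolding wc_def Inv_def by blast+
  then show ?case using Atom refuted_not_ax[of C "wlv w" "wLf w" "wRf w"] unfolding wc_def axS_def by auto
next
  case (Imp A B)
  have ni: "Imp A B \<notin> wLf w" "Imp A B \<notin> wRf w" using Imp.prems unfolding wc_def Sat_def by blast+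
  have "Imp A B \<in> wHL w \<longrightarrow> B \<in> wHL w \<or> A \<in> wHR w" "Imp A B \<in> wHR w \<longrightarrow> A \<in> wHL w \<and> B \<in> wHR w"
    using Imp.prems ni unfolding wc_def Inv_def by blast+
  then show ?case using Imp.IH[OF Imp.prems] by auto
next
  case (Box A)
  have w: "wc C w" by fact
  have L: "Tr A C v" if "Box A \<in> wHL w" "wc C v" "Rel w v" for v
  proof -
    have bl: "Box A \<in> wLf w" using w that(1) unfolding wc_def Inv_def by blast
    have "Box A \<in> wLf v"
    proof (cases "w = v")
      case True then show ?thesis using bl by simp
    next
      case False
      then have "boxes (wLf w) \<subseteq> boxes (wLf v)" using that(3) unfolding Rel_def by blast
      then show ?thesis using bl unfolding boxes_def by auto
    qed
    then have "A \<in> wHL v" using that(2) unfolding wc_def Sat_def by blast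
    then show ?thesis using Box.IH[OF that(2)] by blast
  qed
  have R: "\<exists>v. wc C v \<and> Rel w v \<and> \<not> Tr A C v" if "Box A \<in> wHR w"
  proof (cases "A \<in> wHR w")
    case True
    then show ?thesis using Box.IH[OF w] w by (intro exI[of _ w]) (auto simp: Rel_def)
  next
    case False
    let ?j = "wlv w"
    have br: "Box A \<in> wRf w" using w that False unfolding wc_def Inv_def by blast
    have ref: "refuted C ?j (wLf w) (wRf w)" using w unfolding wc_def by blast
    have LC: "wLf w \<subseteq> C" "wRf w \<subseteq> C" using ref unfolding refuted_def UC_def by auto
    have AC: "A \<in> C" using closedC_sub(2)[OF cC] br LC by blast
    have bC: "boxes (wLf w) \<subseteq> C" using LC unfolding boxes_def by auto
    have lp: "(wLf w, wRf w - {Box A} \<union> {A}) \<in> mu (PP C ?j)" using w br unfolding wc_def Sat_def by blast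
    have nst: "\<not> step_ok (PP C ?j) (mu (PP C ?j)) (wLf w) (wRf w)"
      using ref mu_unfold unfolding refuted_def by blast
    have np: "(boxes (wLf w), {A}) \<notin> PP C ?j"
    proof
      assume "(boxes (wLf w), {A}) \<in> PP C ?j"
      then have "step_ok (PP C ?j) (mu (PP C ?j)) (wLf w) (wRf w)" using br lp unfolding step_ok_def by blast
      then show False using nst by blast
    qed
    have inU: "(boxes (wLf w), {A}) \<in> UC C" using bC AC unfolding UC_def by auto
    then obtain j' where j': "?j = Suc j'" using np by (cases ?j) auto
    have r2: "refuted C j' (boxes (wLf w)) {A}" using np inU j' unfolding refuted_def by auto
    have i2: "Inv C (boxes (wLf w)) {A} (boxes (wLf w)) {A}" by (rule Inv_init) (use bC AC in auto)
    obtain v where v: "wc C v" "wlv v = j'" "boxes (boxes (wLf w)) \<subseteq> wLf v" "{A} \<subseteq> wHR v"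
      using sat_exists[OF cC r2 i2] by blast
    have "boxes (wLf w) \<subseteq> boxes (wLf v)" using v(3) unfolding boxes_def by auto
    then have "Rel w v" using v(2) j' unfolding Rel_def by auto
    moreover have "\<not> Tr A C v" using Box.IH[OF v(1)] v(4) by auto
    ultimately show ?thesis using v(1) by blast
  qed
  show ?case using L R by auto
qed


definition fals :: "('w \<Rightarrow> 'a fm \<Rightarrow> bool) \<Rightarrow> 'w \<Rightarrow> 'a sequent \<Rightarrow> bool" where
  "fals Tp w S \<longleftrightarrow> (\<forall>F. F \<in># fst S \<longrightarrow> Tp w F) \<and> (\<forall>F. F \<in># snd S \<longrightarrow> \<not> Tp w F)"

lemma map_eq2: "map f xs = [a,b] \<Longrightarrow> length xs = 2 \<and> f (xs!0) = a \<and> f (xs!1) = b"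
  by (cases xs; cases "tl xs") auto

lemma map_eq1: "map f xs = [a] \<Longrightarrow> length xs = 1 \<and> f (xs!0) = a"
  by (cases xs) auto

locale smodel =
  fixes Wp :: "'w \<Rightarrow> bool" and Tp :: "'w \<Rightarrow> 'a fm \<Rightarrow> bool" and lv :: "'w \<Rightarrow> nat"
  assumes a1: "\<And>w. Wp w \<Longrightarrow> \<not> Tp w Bot"
  and a2: "\<And>w A B. Wp w \<Longrightarrow> Tp w (Imp A B) = (Tp w A \<longrightarrow> Tp w B)"
  and a3: "\<And>w B. Wp w \<Longrightarrow> Tp w (Box B) \<Longrightarrow> Tp w B"
  and a4: "\<And>w A. Wp w \<Longrightarrow> \<not> Tp w (Box A) \<Longrightarrow> Tp w A \<Longrightarrow>
     \<exists>v. Wp v \<and> lv v < lv w \<and> \<not> Tp v A \<and> (\<forall>B. Tp w (Box B) \<longrightarrow> Tp v (Box B))"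
begin

lemma local_step:
  assumes cn: "correct_node s" and w: "Wp w" and fl: "fals Tp w (seq_of s)"
  shows "\<exists>i w'. i < length (subs s) \<and> Wp w' \<and> fals Tp w' (seq_of (subs s ! i)) \<and>
           (if box_right s i then lv w' < lv w else w' = w)"
proof -
  let ?S = "seq_of s" and ?ps = "map seq_of (subs s)"
  have nb: "\<not> box_right s i" if "rule_of s \<noteq> BoxR" for i using that unfolding box_right_def by simp
  show ?thesis
  proof (cases "rule_of s")
    case Init
    with cn have "(\<exists>\<Gamma> \<Delta> p. ?S = (\<Gamma> + {#Atom p#}, {#Atom p#} + \<Delta>)) \<or> (\<exists>\<Gamma> \<Delta>. ?S = (\<Gamma> + {#Bot#}, \<Delta>))"
      unfolding correct_node_def Let_def by simp
    then show ?thesis using fl a1[OF w] unfolding fals_def by auto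
  next
    case ImpL
    with cn obtain \<Gamma> \<Delta> A B where S: "?S = (\<Gamma> + {#Imp A B#}, \<Delta>)"
      and ps: "?ps = [(\<Gamma> + {#B#}, \<Delta>), (\<Gamma>, {#A#} + \<Delta>)]"
      unfolding correct_node_def Let_def by auto
    from map_eq2[OF ps] have l: "length (subs s) = 2" "seq_of (subs s ! 0) = (\<Gamma> + {#B#}, \<Delta>)"
      "seq_of (subs s ! 1) = (\<Gamma>, {#A#} + \<Delta>)" by auto
    have ti: "Tp w (Imp A B)" using fl S unfolding fals_def by auto
    show ?thesis
    proof (cases "Tp w B")
      case True
      then have "fals Tp w (seq_of (subs s ! 0))" using fl S l unfolding fals_def by auto
      then show ?thesis using l w nb[OF] ImpL by (intro exI[of _ 0] exI[of _ w]) auto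
    next
      case False
      then have "\<not> Tp w A" using ti a2[OF w] by auto
      then have "fals Tp w (seq_of (subs s ! 1))" using fl S l unfolding fals_def by auto
      then show ?thesis using l w nb ImpL by (intro exI[of _ 1] exI[of _ w]) auto
    qed
  next
    case ImpR
    with cn obtain \<Gamma> \<Delta> A B where S: "?S = (\<Gamma>, {#Imp A B#} + \<Delta>)"
      and ps: "?ps = [(\<Gamma> + {#A#}, {#B#} + \<Delta>)]"
      unfolding correct_node_def Let_def by auto
    from map_eq1[OF ps] have l: "length (subs s) = 1" "seq_of (subs s ! 0) = (\<Gamma> + {#A#}, {#B#} + \<Delta>)" by auto
    have "\<not> Tp w (Imp A B)" using fl S unfolding fals_def by auto
    then have "Tp w A" "\<not> Tp w B" using a2[OF w] by auto
    then have "fals Tp w (seq_of (subs s ! 0))" using fl S l unfolding fals_def by auto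
    then show ?thesis using l w nb ImpR by (intro exI[of _ 0] exI[of _ w]) auto
  next
    case Refl
    with cn obtain \<Gamma> \<Delta> B where S: "?S = (\<Gamma> + {#Box B#}, \<Delta>)"
      and ps: "?ps = [(\<Gamma> + {#B#} + {#Box B#}, \<Delta>)]"
      unfolding correct_node_def Let_def by auto
    from map_eq1[OF ps] have l: "length (subs s) = 1" "seq_of (subs s ! 0) = (\<Gamma> + {#B#} + {#Box B#}, \<Delta>)" by auto
    have "Tp w (Box B)" using fl S unfolding fals_def by auto
    then have "Tp w B" using a3[OF w] by auto
    then have "fals Tp w (seq_of (subs s ! 0))" using fl S l unfolding fals_def by auto
    then show ?thesis using l w nb Refl by (intro exI[of _ 0] exI[of _ w]) auto
  next
    case Cut
    with cn obtain \<Gamma> \<Delta> A where S: "?S = (\<Gamma>, \<Delta>)"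
      and ps: "?ps = [(\<Gamma>, {#A#} + \<Delta>), (\<Gamma> + {#A#}, \<Delta>)]"
      unfolding correct_node_def Let_def by auto
    from map_eq2[OF ps] have l: "length (subs s) = 2" "seq_of (subs s ! 0) = (\<Gamma>, {#A#} + \<Delta>)"
      "seq_of (subs s ! 1) = (\<Gamma> + {#A#}, \<Delta>)" by auto
    show ?thesis
    proof (cases "Tp w A")
      case True
      then have "fals Tp w (seq_of (subs s ! 1))" using fl S l unfolding fals_def by auto
      then show ?thesis using l w nb Cut by (intro exI[of _ 1] exI[of _ w]) auto
    next
      case False
      then have "fals Tp w (seq_of (subs s ! 0))" using fl S l unfolding fals_def by auto
      then show ?thesis using l w nb Cut by (intro exI[of _ 0] exI[of _ w]) auto
    qed
  next
    case BoxR
    with cn obtain \<Gamma> \<Pi> \<Delta> A where S: "?S = (\<Gamma> + image_mset Box \<Pi>, {#Box A#} + \<Delta>)"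
      and ps: "?ps = [(\<Gamma> + image_mset Box \<Pi>, {#A#} + \<Delta>), (image_mset Box \<Pi>, {#A#})]"
      unfolding correct_node_def Let_def by auto
    from map_eq2[OF ps] have l: "length (subs s) = 2" "seq_of (subs s ! 0) = (\<Gamma> + image_mset Box \<Pi>, {#A#} + \<Delta>)"
      "seq_of (subs s ! 1) = (image_mset Box \<Pi>, {#A#})" by auto
    have br: "box_right s 1" "\<not> box_right s 0" using BoxR l unfolding box_right_def by auto
    have nba: "\<not> Tp w (Box A)" using fl S unfolding fals_def by auto
    show ?thesis
    proof (cases "Tp w A")
      case False
      then have "fals Tp w (seq_of (subs s ! 0))" using fl S l unfolding fals_def by auto
      then show ?thesis using l w br by (intro exI[of _ 0] exI[of _ w]) auto
    next
      case True
      obtain v where v: "Wp v" "lv v < lv w" "\<not> Tp v A" "\<forall>B. Tp w (Box B) \<longrightarrow> Tp v (Box B)"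
        using a4[OF w nba True] by blast
      have "\<forall>F. F \<in># image_mset Box \<Pi> \<longrightarrow> Tp w F" using fl S unfolding fals_def by auto
      then have "\<forall>F. F \<in># image_mset Box \<Pi> \<longrightarrow> Tp v F" using v(4) by auto
      then have "fals Tp v (seq_of (subs s ! 1))" using l v(3) unfolding fals_def by auto
      then show ?thesis using l v br by (intro exI[of _ 1] exI[of _ v]) auto
    qed
  qed
qed

lemma soundness:
  assumes pr: "is_proof t" and w0: "Wp w0" and fl0: "fals Tp w0 (seq_of t)"
  shows False
proof -
  let ?cond = "\<lambda>x::'a dtree \<times> 'w. correct_node (fst x) \<and> Wp (snd x) \<and> fals Tp (snd x) (seq_of (fst x))"
  let ?Q = "\<lambda>x y. ?cond x \<longrightarrow> (fst y < length (subs (fst x)) \<and> Wp (snd y) \<and>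
      fals Tp (snd y) (seq_of (subs (fst x) ! fst y)) \<and>
      (if box_right (fst x) (fst y) then lv (snd y) < lv (snd x) else snd y = snd x))"
  have "\<forall>x. \<exists>y. ?Q x y"
  proof
    fix x :: "'a dtree \<times> 'w"
    show "\<exists>y. ?Q x y"
    proof (cases "?cond x")
      case True
      then obtain i w' where "i < length (subs (fst x)) \<and> Wp w' \<and> fals Tp w' (seq_of (subs (fst x) ! i)) \<and>
           (if box_right (fst x) i then lv w' < lv (snd x) else w' = snd x)"
        using local_step[of "fst x" "snd x"] by blast
      then show ?thesis by (intro exI[of _ "(i,w')"]) simp
    qed blast
  qed
  then obtain ch where ch: "\<And>x. ?Q x (ch x)" by metis
  define st where "st = rec_nat (t, w0) (\<lambda>_ x. (subs (fst x) ! fst (ch x), snd (ch x)))"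
  have st0: "st 0 = (t, w0)" and stS: "st (Suc k) = (subs (fst (st k)) ! fst (ch (st k)), snd (ch (st k)))" for k
    by (simp_all add: st_def)
  define f where "f k = fst (ch (st k))" for k
  have inv: "sub t (map f [0..<k]) = Some (fst (st k)) \<and> Wp (snd (st k)) \<and> fals Tp (snd (st k)) (seq_of (fst (st k)))" for k
  proof (induction k)
    case 0 then show ?case using st0 w0 fl0 by simp
  next
    case (Suc k)
    have cn: "correct_node (fst (st k))" using pr Suc unfolding is_proof_def by blast
    then have q: "fst (ch (st k)) < length (subs (fst (st k))) \<and> Wp (snd (ch (st k))) \<and>
      fals Tp (snd (ch (st k))) (seq_of (subs (fst (st k)) ! fst (ch (st k))))"
      using ch[of "st k"] Suc by auto
    have e: "sub t (map f [0..<Suc k]) = Some (subs (fst (st k)) ! f k)"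
      unfolding map_upt_Suc using sub_snoc[of t "map f [0..<k]" "fst (st k)" "f k"] Suc q f_def by simp
    show ?case using e q stS[of k] unfolding f_def by simp
  qed
  have lvstep: "(if box_right (fst (st k)) (f k) then lv (snd (st (Suc k))) < lv (snd (st k)) else lv (snd (st (Suc k))) = lv (snd (st k)))" for k
  proof -
    have cn: "correct_node (fst (st k))" using pr inv[of k] unfolding is_proof_def by blast
    then show ?thesis using ch[of "st k"] inv[of k] stS[of k] f_def by (auto split: if_splits)
  qed
  have ib: "inf_branch t f" unfolding inf_branch_def using inv by blast
  have inf: "infinite {k. \<exists>s. sub t (map f [0..<k]) = Some s \<and> box_right s (f k)}"
    using pr ib unfolding is_proof_def by blast
  have mono: "lv (snd (st (k + d))) \<le> lv (snd (st k))" for k d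
  proof (induction d)
    case (Suc d) then show ?case using lvstep[of "k + d"] by (auto split: if_splits)
  qed simp
  have desc: "\<exists>k. lv (snd (st k)) + m \<le> lv (snd (st 0))" for m
  proof (induction m)
    case 0 then show ?case by (intro exI[of _ 0]) simp
  next
    case (Suc m)
    then obtain k where k: "lv (snd (st k)) + m \<le> lv (snd (st 0))" by blast
    from inf obtain k' where k': "k' \<ge> k" "\<exists>s. sub t (map f [0..<k']) = Some s \<and> box_right s (f k')"
      unfolding infinite_nat_iff_unbounded_le by blast
    then have "box_right (fst (st k')) (f k')" using inv[of k'] by auto
    then have "lv (snd (st (Suc k'))) < lv (snd (st k'))" using lvstep[of k'] by simp
    moreover have "lv (snd (st k')) \<le> lv (snd (st k))" using mono[of k "k' - k"] k'(1) by simp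
    ultimately show ?case using k by (intro exI[of _ "Suc k'"]) simp
  qed
  from desc[of "Suc (lv (snd (st 0)))"] show False by auto
qed

end


lemma model_ok:
  assumes cC: "closedC C"
  shows "smodel (wc C) (\<lambda>w F. Tr F C w) wlv"
proof
  fix w assume "wc C w" then show "\<not> Tr Bot C w" by simp
next
  fix w A B assume "wc C w" then show "Tr (Imp A B) C w = (Tr A C w \<longrightarrow> Tr B C w)" by simp
next
  fix w B assume "wc C w" "Tr (Box B) C w" then show "Tr B C w" by (simp add: Rel_def)
next
  fix w A assume w: "wc C w" and nb: "\<not> Tr (Box A) C w" and ta: "Tr A C w"
  from nb obtain v where v: "wc C v" "Rel w v" "\<not> Tr A C v" by auto
  have "v \<noteq> w" using v(3) ta by auto
  then have lt: "wlv v < wlv w" using v(2) unfolding Rel_def by auto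
  have "\<forall>B. Tr (Box B) C w \<longrightarrow> Tr (Box B) C v"
    using v(2) Rel_trans by auto
  then show "\<exists>v. wc C v \<and> wlv v < wlv w \<and> \<not> Tr A C v \<and> (\<forall>B. Tr (Box B) C w \<longrightarrow> Tr (Box B) C v)"
    using v lt by blast
qed

lemma cut_admissible:
  assumes p1: "proof_of \<pi> (\<Gamma>, \<Delta> + {#A#})" and p2: "proof_of \<tau> (\<Gamma> + {#A#}, \<Delta>)"
  shows "\<exists>t. proof_of t (\<Gamma>,\<Delta>) \<and> (\<forall>p s. sub t p = Some s \<longrightarrow> rule_of s \<noteq> Cut)"
proof -
  define C where "C = (\<Union>F\<in>set_mset \<Gamma> \<union> set_mset \<Delta>. sf F)"
  have cC: "closedC C" unfolding C_def by (rule closedC_sf) simp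
  then have fC: "finite C" unfolding closedC_def by blast
  obtain J where J: "PP C (Suc J) = PP C J" using PP_stable[OF fC] by blast
  define N where "N = PP C J"
  have NmuU: "N = mu N \<inter> UC C" using J unfolding N_def by simp
  have Nsub: "N \<subseteq> (\<Union>k. Dk N k)" using NmuU unfolding mu_def by blast
  have s0U: "(set_mset \<Gamma>, set_mset \<Delta>) \<in> UC C" unfolding UC_def C_def using sf_self by blast
  show ?thesis
  proof (cases "(set_mset \<Gamma>, set_mset \<Delta>) \<in> N")
    case True
    then show ?thesis using cutfree_exists[OF Nsub True] by blast
  next
    case False
    then have "(set_mset \<Gamma>, set_mset \<Delta>) \<notin> mu N" using NmuU s0U by blast
    then have r: "refuted C J (set_mset \<Gamma>) (set_mset \<Delta>)" using s0U unfolding refuted_def N_def by simp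
    have i: "Inv C (set_mset \<Gamma>) (set_mset \<Delta>) (set_mset \<Gamma>) (set_mset \<Delta>)"
      by (rule Inv_init) (use s0U in \<open>auto simp: UC_def\<close>)
    obtain w where w: "wc C w" "set_mset \<Gamma> \<subseteq> wHL w" "set_mset \<Delta> \<subseteq> wHR w"
      using sat_exists[OF cC r i] by blast
    have tG: "\<forall>F. F \<in># \<Gamma> \<longrightarrow> Tr F C w" using truth[OF cC w(1)] w(2) by blast
    have tD: "\<forall>F. F \<in># \<Delta> \<longrightarrow> \<not> Tr F C w" using truth[OF cC w(1)] w(3) by blast
    interpret M: smodel "wc C" "\<lambda>w F. Tr F C w" wlv by (rule model_ok[OF cC])
    show ?thesis
    proof (cases "Tr A C w")
      case True
      have "fals (\<lambda>w F. Tr F C w) w (seq_of \<tau>)" using p2 tG tD True unfolding proof_of_def fals_def by auto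
      then have False using M.soundness[of \<tau> w] p2 w(1) unfolding proof_of_def by blast
      then show ?thesis ..
    next
      case False
      have "fals (\<lambda>w F. Tr F C w) w (seq_of \<pi>)" using p1 tG tD False unfolding proof_of_def fals_def by auto
      then have False using M.soundness[of \<pi> w] p1 w(1) unfolding proof_of_def by blast
      then show ?thesis ..
    qed
  qed
qed

definition cp :: "'a fm \<Rightarrow> 'a dtree \<Rightarrow> 'a dtree \<Rightarrow> bool" where
  "cp A \<pi> \<tau> \<longleftrightarrow> seq_of \<pi> = (fst (seq_of \<pi>), snd (seq_of \<tau>) + {#A#}) \<and>
                  seq_of \<tau> = (fst (seq_of \<pi>) + {#A#}, snd (seq_of \<tau>))"

definition cutfree :: "'a dtree \<Rightarrow> bool" where
  "cutfree t \<longleftrightarrow> (\<forall>p s. sub t p = Some s \<longrightarrow> rule_of s \<noteq> Cut)"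

definition reA :: "'a fm \<Rightarrow> 'a dtree \<Rightarrow> 'a dtree \<Rightarrow> 'a dtree" where
  "reA A \<pi> \<tau> = (if cp A \<pi> \<tau>
     then (SOME t. proof_of t (fst (seq_of \<pi>), snd (seq_of \<tau>)) \<and> cutfree t) else \<pi>)"

lemma reA_cp:
  assumes "cp A \<pi> \<tau>" "\<pi> \<in> proofs" "\<tau> \<in> proofs"
  shows "proof_of (reA A \<pi> \<tau>) (fst (seq_of \<pi>), snd (seq_of \<tau>)) \<and> cutfree (reA A \<pi> \<tau>)"
proof -
  have "proof_of \<pi> (fst (seq_of \<pi>), snd (seq_of \<tau>) + {#A#})" "proof_of \<tau> (fst (seq_of \<pi>) + {#A#}, snd (seq_of \<tau>))"
    using assms unfolding cp_def proof_of_def proofs_def by auto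
  from cut_admissible[OF this] have "\<exists>t. proof_of t (fst (seq_of \<pi>), snd (seq_of \<tau>)) \<and> cutfree t"
    unfolding cutfree_def .
  then have "proof_of (SOME t. proof_of t (fst (seq_of \<pi>), snd (seq_of \<tau>)) \<and> cutfree t) (fst (seq_of \<pi>), snd (seq_of \<tau>))
     \<and> cutfree (SOME t. proof_of t (fst (seq_of \<pi>), snd (seq_of \<tau>)) \<and> cutfree t)" by (rule someI_ex)
  then show ?thesis using assms(1) unfolding reA_def by simp
qed

lemma frag_root: "n > 0 \<Longrightarrow> frag n t [] = Some (Inl (seq_of t, rule_of t, length (subs t)))"
  unfolding frag_def by simp

lemma sim_seq: "n > 0 \<Longrightarrow> sim n t u \<Longrightarrow> seq_of t = seq_of u"
  using frag_root[of n t] frag_root[of n u] unfolding sim_def by auto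

theorem lemma6p4:
  fixes A :: "'a fm"
  shows "\<exists>u :: 'a dtree \<Rightarrow> 'a dtree \<Rightarrow> 'a dtree. removing A u \<and> adequate u"
proof (intro exI[of _ "reA A"] conjI)
  have ne: "non_expansive (reA A)"
    unfolding non_expansive_def
  proof (intro allI impI)
    fix n :: nat and \<pi> \<pi>' \<tau> \<tau>' :: "'a dtree"
    assume h: "\<pi> \<in> proofs" "\<pi>' \<in> proofs" "\<tau> \<in> proofs" "\<tau>' \<in> proofs" "sim n \<pi> \<pi>'" "sim n \<tau> \<tau>'"
    show "sim n (reA A \<pi> \<tau>) (reA A \<pi>' \<tau>')"
    proof (cases "n = 0")
      case True then show ?thesis unfolding sim_def by simp
    next
      case False
      then have "seq_of \<pi> = seq_of \<pi>'" "seq_of \<tau> = seq_of \<tau>'" using sim_seq h(5,6) by auto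
      then have e: "cp A \<pi> \<tau> = cp A \<pi>' \<tau>'" unfolding cp_def by simp
      show ?thesis
      proof (cases "cp A \<pi> \<tau>")
        case True
        then have "reA A \<pi> \<tau> = reA A \<pi>' \<tau>'" using e \<open>seq_of \<pi> = seq_of \<pi>'\<close> \<open>seq_of \<tau> = seq_of \<tau>'\<close>
          unfolding reA_def by simp
        then show ?thesis unfolding sim_def by simp
      next
        case False
        then show ?thesis using e h(5) unfolding reA_def by simp
      qed
    qed
  qed
  show "removing A (reA A)"
    unfolding removing_def
  proof (intro conjI allI impI)
    fix \<pi> \<tau> :: "'a dtree" assume h: "\<pi> \<in> proofs" "\<tau> \<in> proofs"
    show "reA A \<pi> \<tau> \<in> proofs"
    proof (cases "cp A \<pi> \<tau>")
      case True then show ?thesis using reA_cp[OF True h] unfolding proof_of_def proofs_def by simp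
    next
      case False then show ?thesis using h unfolding reA_def by simp
    qed
  next
    show "non_expansive (reA A)" by (rule ne)
  next
    fix \<pi> \<tau> :: "'a dtree" and \<Gamma> \<Delta>
    assume h: "proof_of \<pi> (\<Gamma>, \<Delta> + {#A#})" "proof_of \<tau> (\<Gamma> + {#A#}, \<Delta>)"
    then have c: "cp A \<pi> \<tau>" and s: "fst (seq_of \<pi>) = \<Gamma>" "snd (seq_of \<tau>) = \<Delta>"
      unfolding cp_def proof_of_def by auto
    have "\<pi> \<in> proofs" "\<tau> \<in> proofs" using h unfolding proof_of_def proofs_def by auto
    then show "proof_of (reA A \<pi> \<tau>) (\<Gamma>, \<Delta>)" using reA_cp[OF c] s by simp
  qed
  show "adequate (reA A)"
    unfolding adequate_def
  proof (intro allI impI)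
    fix n and \<pi> \<tau> :: "'a dtree" assume h: "\<pi> \<in> proofs_n n" "\<tau> \<in> proofs_n n"
    then have p: "\<pi> \<in> proofs" "\<tau> \<in> proofs" unfolding proofs_n_def by auto
    show "reA A \<pi> \<tau> \<in> proofs_n n"
    proof (cases "cp A \<pi> \<tau>")
      case True
      from reA_cp[OF True p] show ?thesis unfolding proofs_n_def proofs_def proof_of_def cutfree_def by blast
    next
      case False then show ?thesis using h(1) unfolding reA_def by simp
    qed
  qed
qed


end
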